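(* Let $S^{(1)}_{\rm tr},S^{(1)}_1,\dots,S^{(1)}_m$ be the output of Algorithm 1 and $S^{(2)}_{\rm tr},S^{(2)}_1,\dots,S^{(2)}_m$ the output of Algorithm 2 (both defined in the context). If every $f_i$ is monotone and submodular, then $$\max\Bigl\{\sum_{i=1}^m f_i\bigl(S^{(1)}_{\rm tr}\cup S^{(1)}_i\bigr),\;\sum_{i=1}^m f_i\bigl(S^{(2)}_{\rm tr}\cup S^{(2)}_i\bigr)\Bigr\}\;\ge\;0.53\cdot\mathrm{OPT}.$$ (That is, the Meta-Greedy algorithm, which runs Algorithms 1 and 2 and returns the solution with larger objective $\sum_i f_i(S_{\rm tr}\cup S_i)$, is $0.53$-approximate.)
   Context: $V$ is a finite ground set with $|V|=n$; $k,l$ are integers with $1\le l<k\le n$. For $i=1,\dots,m$, $f_i:2^V\to\mathbb{R}_{\ge 0}$ is a set function; $f_i$ is monotone if $A\subseteq B\Rightarrow f_i(A)\le f_i(B)$ and submodular if $f_i(A)+f_i(B)\ge f_i(A\cup B)+f_i(A\cap B)$ for all $A,B\subseteq V$. Write $\Delta_i(e\mid S)=f_i(S\cup\{e\})-f_i(S)$. Define $$\mathrm{OPT}=\max_{S_{\rm tr}\subseteq V,\,|S_{\rm tr}|\le l}\;\sum_{i=1}^m\;\max_{S_i\subseteq V,\,|S_i|\le k-l} f_i(S_{\rm tr}\cup S_i).$$ Algorithm 1: start with $S_{\rm tr}=S_1=\dots=S_m=\emptyset$. Phase 1: for $t=1,\dots,l$, choose $e^*\in\arg\max_{e\in V\setminus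 S_{\rm tr}}\sum_{i=1}^m\Delta_i(e\mid S_{\rm tr})$ and set $S_{\rm tr}\leftarrow S_{\rm tr}\cup\{e^*\}$. Phase 2: for $t=1,\dots,k-l$ and each $i$, choose $e_i^*\in\arg\max_{e\in V\setminus(S_{\rm tr}\cup S_i)}\Delta_i(e\mid S_{\rm tr}\cup S_i)$ and set $S_i\leftarrow S_i\cup\{e_i^*\}$. Algorithm 2: start with $S_{\rm tr}=S_1=\dots=S_m=\emptyset$. Phase 1: for each $i$ and $t=1,\dots,k-l$, choose $e_i^*\in\arg\max_{e\in V\setminus S_i}\Delta_i(e\mid S_i)$ and set $S_i\leftarrow S_i\cup\{e_i^*\}$. Phase 2: for $t=1,\dots,l$, choose $e^*\in\arg\max_{e\in V\setminus S_{\rm tr}}\sum_{i=1}^m\Delta_i(e\mid S_{\rm tr}\cup S_i)$ and set $S_{\rm tr}\leftarrow S_{\rm tr}\cup\{e^*\}$. Ties in all argmax's are broken arbitrarily. *)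

theory Defs
  imports Complex_Main
begin

definition gain :: "('a set \<Rightarrow> real) \<Rightarrow> 'a \<Rightarrow> 'a set \<Rightarrow> real" where
  "gain g e S = g (S \<union> {e}) - g S"

definition monotone_on_subsets :: "'a set \<Rightarrow> ('a set \<Rightarrow> real) \<Rightarrow> bool" where
  "monotone_on_subsets V g \<longleftrightarrow> (\<forall>A B. A \<subseteq> B \<and> B \<subseteq> V \<longrightarrow> g A \<le> g B)"

definition submodular_on_subsets :: "'a set \<Rightarrow> ('a set \<Rightarrow> real) \<Rightarrow> bool" where
  "submodular_on_subsets V g \<longleftrightarrow>
     (\<forall>A B. A \<subseteq> V \<and> B \<subseteq> V \<longrightarrow> g A + g B \<ge> g (A \<union> B) + g (A \<inter> B))"

text \<open>A generic greedy run with arbitrary tie breaking: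
  \<open>greedy_run V B w t S\<close> means that starting from the empty set and performing
  \<open>t\<close> steps, each adding an element \<open>e \<in> V - (B \<union> S)\<close> maximising the score
  \<open>w S e\<close> over all such candidates, one can arrive at \<open>S\<close>.\<close>
inductive greedy_run :: "'a set \<Rightarrow> 'a set \<Rightarrow> ('a set \<Rightarrow> 'a \<Rightarrow> real) \<Rightarrow> nat \<Rightarrow> 'a set \<Rightarrow> bool"
  for V B w where
  start: "greedy_run V B w 0 {}"
| step: "greedy_run V B w t S \<Longrightarrow> e \<in> V - (B \<union> S) \<Longrightarrow>
         (\<forall>e' \<in> V - (B \<union> S). w S e' \<le> w S e) \<Longrightarrow>
         greedy_run V B w (Suc t) (insert e S)"

definition alg1_output ::
  "'a set \<Rightarrow> nat \<Rightarrow> nat \<Rightarrow> nat \<Rightarrow> (nat \<Rightarrow> 'a set \<Rightarrow> real) \<Rightarrow> 'a set \<Rightarrow> (nat \<Rightarrow> 'a set) \<Rightarrow> bool" where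
  "alg1_output V k l m f Str Ss \<longleftrightarrow>
     greedy_run V {} (\<lambda>S e. \<Sum>i\<in>{1..m}. gain (f i) e S) l Str \<and>
     (\<forall>i\<in>{1..m}. greedy_run V Str (\<lambda>S e. gain (f i) e (Str \<union> S)) (k - l) (Ss i))"

definition alg2_output ::
  "'a set \<Rightarrow> nat \<Rightarrow> nat \<Rightarrow> nat \<Rightarrow> (nat \<Rightarrow> 'a set \<Rightarrow> real) \<Rightarrow> 'a set \<Rightarrow> (nat \<Rightarrow> 'a set) \<Rightarrow> bool" where
  "alg2_output V k l m f Str Ss \<longleftrightarrow>
     (\<forall>i\<in>{1..m}. greedy_run V {} (\<lambda>S e. gain (f i) e S) (k - l) (Ss i)) \<and>
     greedy_run V {} (\<lambda>S e. \<Sum>i\<in>{1..m}. gain (f i) e (S \<union> Ss i)) l Str"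

definition opt ::
  "'a set \<Rightarrow> nat \<Rightarrow> nat \<Rightarrow> nat \<Rightarrow> (nat \<Rightarrow> 'a set \<Rightarrow> real) \<Rightarrow> real" where
  "opt V k l m f =
     Max ((\<lambda>T. \<Sum>i\<in>{1..m}. Max ((\<lambda>S. f i (T \<union> S)) ` {S. S \<subseteq> V \<and> card S \<le> k - l}))
          ` {T. T \<subseteq> V \<and> card T \<le> l})"

end

theory Submission imports Defs begin

definition MS :: "'a set \<Rightarrow> ('a set \<Rightarrow> real) \<Rightarrow> bool" where
  "MS V G \<longleftrightarrow> monotone_on_subsets V G \<and> submodular_on_subsets V G"

lemma MS_mono: "MS V G \<Longrightarrow> A \<subseteq> B \<Longrightarrow> B \<subseteq> V \<Longrightarrow> G A \<le> G B"
  unfolding MS_def monotone_on_subsets_def by blast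

lemma MS_sub: "MS V G \<Longrightarrow> A \<subseteq> V \<Longrightarrow> B \<subseteq> V \<Longrightarrow> G A + G B \<ge> G (A \<union> B) + G (A \<inter> B)"
  unfolding MS_def submodular_on_subsets_def by blast

lemma dimret:
  assumes "MS V G" "X \<subseteq> Y" "Y \<subseteq> V" "Z \<subseteq> V"
  shows "G (Y \<union> Z) - G Y \<le> G (X \<union> Z) - G X"
proof -
  have "G (X \<union> Z) + G Y \<ge> G ((X \<union> Z) \<union> Y) + G ((X \<union> Z) \<inter> Y)"
    using MS_sub[OF assms(1), of "X \<union> Z" Y] assms by auto
  moreover have "(X \<union> Z) \<union> Y = Y \<union> Z" using assms by blast
  moreover have "G X \<le> G ((X \<union> Z) \<inter> Y)"
    by (rule MS_mono[OF assms(1)]) (use assms in auto)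
  ultimately show ?thesis by (smt (verit))
qed

lemma union_le_sum_gain:
  assumes "MS V G" "finite C" "S \<subseteq> V" "C \<subseteq> V"
  shows "G (S \<union> C) - G S \<le> (\<Sum>c\<in>C. G (S \<union> {c}) - G S)"
  using assms(2,4)
proof (induction C rule: finite_induct)
  case empty then show ?case by simp
next
  case (insert c C)
  have "G (S \<union> insert c C) - G (S \<union> C) = G ((S \<union> C) \<union> {c}) - G (S \<union> C)"
    by (simp add: insert_commute)
  also have "\<dots> \<le> G (S \<union> {c}) - G S"
    by (rule dimret[OF assms(1)]) (use insert assms in auto)
  finally show ?case using insert by simp
qed

lemma MS_sum:
  assumes "\<And>i. i \<in> I \<Longrightarrow> MS V (f i)"
  shows "MS V (\<lambda>S. \<Sum>i\<in>I. f i S)"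
  unfolding MS_def monotone_on_subsets_def submodular_on_subsets_def
proof (intro conjI allI impI)
  fix A B assume "A \<subseteq> B \<and> B \<subseteq> V"
  then show "(\<Sum>i\<in>I. f i A) \<le> (\<Sum>i\<in>I. f i B)"
    by (intro sum_mono MS_mono[OF assms]) auto
next
  fix A B assume "A \<subseteq> V \<and> B \<subseteq> V"
  then have "(\<Sum>i\<in>I. f i (A \<union> B) + f i (A \<inter> B)) \<le> (\<Sum>i\<in>I. f i A + f i B)"
    by (intro sum_mono MS_sub[OF assms]) auto
  then show "(\<Sum>i\<in>I. f i (A \<union> B)) + (\<Sum>i\<in>I. f i (A \<inter> B)) \<le> (\<Sum>i\<in>I. f i A) + (\<Sum>i\<in>I. f i B)"
    by (simp add: sum.distrib)
qed

lemma MS_shift: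
  assumes "MS V G" "X \<subseteq> V"
  shows "MS V (\<lambda>S. G (X \<union> S))"
  unfolding MS_def monotone_on_subsets_def submodular_on_subsets_def
proof (intro conjI allI impI)
  fix A B assume "A \<subseteq> B \<and> B \<subseteq> V"
  then show "G (X \<union> A) \<le> G (X \<union> B)" by (intro MS_mono[OF assms(1)]) (use assms(2) in auto)
next
  fix A B assume AB: "A \<subseteq> V \<and> B \<subseteq> V"
  have e1: "(X \<union> A) \<union> (X \<union> B) = X \<union> (A \<union> B)" by blast
  have e2: "(X \<union> A) \<inter> (X \<union> B) = X \<union> (A \<inter> B)" by blast
  show "G (X \<union> (A \<union> B)) + G (X \<union> (A \<inter> B)) \<le> G (X \<union> A) + G (X \<union> B)"
    using MS_sub[OF assms(1), of "X \<union> A" "X \<union> B"] AB assms(2) by (simp add: e1 e2)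
qed

lemma greedy_run_facts:
  assumes "greedy_run V B w t S"
  shows "S \<subseteq> V - B \<and> finite S \<and> card S = t"
  using assms by (induction rule: greedy_run.induct) auto

lemma exp_step:
  fixes y y' P D s n \<tau> :: real
  assumes n: "n \<ge> 1" and s: "s \<ge> 0" and P: "P \<ge> 0"
    and IH: "\<forall>\<tau>. 0 \<le> \<tau> \<and> \<tau> \<le> s \<longrightarrow> y \<ge> P * (1 - exp (-\<tau>)) + (s - \<tau>) * D"
    and h1: "y' \<ge> y + (P - y) / n" and h2: "y' \<ge> y + D / n"
    and t0: "0 \<le> \<tau>" and t1: "\<tau> \<le> s + 1 / n"
  shows "y' \<ge> P * (1 - exp (-\<tau>)) + (s + 1 / n - \<tau>) * D"
proof (cases "\<tau> \<le> s")
  case True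
  then have "y \<ge> P * (1 - exp (-\<tau>)) + (s - \<tau>) * D" using IH t0 by blast
  then show ?thesis using h2 by (simp add: algebra_simps)
next
  case False
  define w where "w = \<tau> - s"
  define u where "u = s + 1 / n - \<tau>"
  have w0: "w > 0" using False w_def by simp
  have wn: "w \<le> 1 / n" using t1 w_def by simp
  have u0: "u \<ge> 0" using t1 u_def by simp
  have wu: "w + u = 1 / n" using w_def u_def by simp
  have n0: "n > 0" using n by simp
  have w1: "w \<le> 1" using wn n by (smt (verit) divide_le_eq_1)
  define \<nu> where "\<nu> = n * u"
  have nu0: "\<nu> \<ge> 0" using u0 n0 \<nu>_def by simp
  have nu1: "1 - \<nu> = n * w" using wu n0 \<nu>_def by (simp add: field_simps)
  have nw0: "n * w \<ge> 0" using w0 n0 by simp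
  have c1: "n * w * y' \<ge> n * w * (y + (P - y) / n)" using h1 nw0 by (rule mult_left_mono)
  have c2: "\<nu> * y' \<ge> \<nu> * (y + D / n)" using h2 nu0 by (rule mult_left_mono)
  have sumw: "n * w + \<nu> = 1" using nu1 by simp
  have "y' = n * w * y' + \<nu> * y'" using sumw by (metis distrib_right mult_1)
  also have "\<dots> \<ge> n * w * (y + (P - y) / n) + \<nu> * (y + D / n)" using c1 c2 by linarith
  finally have y1: "y' \<ge> n * w * (y + (P - y) / n) + \<nu> * (y + D / n)" .
  have "n * w * (y + (P - y) / n) + \<nu> * (y + D / n) = y * (1 - w) + w * P + u * D"
  proof -
    have a: "n * w * (y + (P - y) / n) = n * w * y + w * (P - y)" using n0 by (simp add: field_simps)
    have b: "\<nu> * (y + D / n) = \<nu> * y + u * D" using n0 unfolding \<nu>_def by (simp add: field_simps)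
    have c: "n * w * y + \<nu> * y = y" using sumw by (metis distrib_right mult_1)
    show ?thesis using a b c by (simp add: algebra_simps)
  qed
  with y1 have y2: "y' \<ge> y * (1 - w) + w * P + u * D" by simp
  have ys: "y \<ge> P * (1 - exp (-s))" using IH s by (metis add.right_neutral diff_self mult_zero_left order_refl)
  have "y * (1 - w) \<ge> P * (1 - exp (-s)) * (1 - w)" using ys w1 by (simp add: mult_right_mono)
  moreover have "exp (-s) * (1 - w) \<le> exp (-s) * exp (-w)"
    using exp_ge_add_one_self[of "-w"] by (intro mult_left_mono) auto
  moreover have "exp (-\<tau>) = exp (-s) * exp (-w)" using w_def by (simp add: exp_add[symmetric])
  ultimately have "y * (1 - w) + w * P \<ge> P * (1 - exp (-\<tau>))"
  proof -
    assume A1: "y * (1 - w) \<ge> P * (1 - exp (-s)) * (1 - w)"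
      and A2: "exp (-s) * (1 - w) \<le> exp (-s) * exp (-w)"
      and A3: "exp (-\<tau>) = exp (-s) * exp (-w)"
    have "P * (exp (-s) * (1 - w)) \<le> P * (exp (-s) * exp (-w))" using A2 P by (rule mult_left_mono)
    moreover have "P * (1 - exp (-s)) * (1 - w) + w * P = P - P * (exp (-s) * (1 - w))"
      by (simp add: algebra_simps)
    ultimately show ?thesis using A1 A3 by (simp add: algebra_simps)
  qed
  then show ?thesis using y2 unfolding u_def[symmetric] by linarith
qed

lemma greedy_bound:
  assumes V: "finite V" and G: "MS V G" and run: "greedy_run V B w t Sf"
    and wG: "\<And>S e. w S e = G (S \<union> {e}) - G S"
    and Bz: "\<And>S c. S \<subseteq> V \<Longrightarrow> c \<in> B \<Longrightarrow> G (S \<union> {c}) = G S"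
    and C: "C \<subseteq> V" "card C \<le> n" and n: "n \<ge> 1"
  shows "\<forall>\<tau>. 0 \<le> \<tau> \<and> \<tau> \<le> real t / real n \<longrightarrow>
     G Sf - G {} \<ge> (G C - G {}) * (1 - exp (-\<tau>)) + (real t / real n - \<tau>) * (G (Sf \<union> C) - G Sf)"
proof -
  have SfV: "Sf \<subseteq> V" using greedy_run_facts[OF run] by blast
  define P where "P = G C - G {}"
  define D where "D = G (Sf \<union> C) - G Sf"
  have P0: "P \<ge> 0" unfolding P_def using MS_mono[OF G, of "{}" C] C by simp
  have finC: "finite C" using C V finite_subset by blast
  have n0: "real n \<ge> 1" using n by simp
  have main: "greedy_run V B w t' S \<Longrightarrow> S \<subseteq> Sf \<Longrightarrow> \<forall>\<tau>. 0 \<le> \<tau> \<and> \<tau> \<le> real t' / real n \<longrightarrow>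
     G S - G {} \<ge> P * (1 - exp (-\<tau>)) + (real t' / real n - \<tau>) * D" for t' S
  proof (induction rule: greedy_run.induct)
    case start
    show ?case
    proof (intro allI impI)
      fix \<tau> :: real assume "0 \<le> \<tau> \<and> \<tau> \<le> real 0 / real n"
      then have "\<tau> = 0" by simp
      then show "G {} - G {} \<ge> P * (1 - exp (-\<tau>)) + (real 0 / real n - \<tau>) * D" by simp
    qed
  next
    case (step t S e)
    have SSf: "S \<subseteq> Sf" using step.prems by blast
    have SVB: "S \<subseteq> V - B" using greedy_run_facts[OF step.hyps(1)] by blast
    have eV: "e \<in> V" using step.hyps(2) by blast
    define gain where "gain = G (S \<union> {e}) - G S"
    have wg: "w S e = gain" using wG gain_def by simp
    have g0: "gain \<ge> 0" unfolding gain_def using MS_mono[OF G, of S "S \<union> {e}"] SVB eV by auto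
    have cle: "G (S \<union> {c}) - G S \<le> gain" if cC: "c \<in> C" for c
    proof -
      have cV: "c \<in> V" using cC C by blast
      show ?thesis
      proof (cases "c \<in> S")
        case True then have "S \<union> {c} = S" by blast
        then show ?thesis using g0 by simp
      next
        case cS: False
        show ?thesis
        proof (cases "c \<in> B")
          case True
          have "S \<subseteq> V" using SVB by blast
          then have "G (S \<union> {c}) = G S" using Bz True by blast
          then show ?thesis using g0 by simp
        next
          case False
          then have "c \<in> V - (B \<union> S)" using cV cS by blast
          then have "w S c \<le> w S e" using step.hyps(3) by blast
          then show ?thesis using wG[of S c] wg by simp
        qed
      qed
    qed
    have "G (S \<union> C) - G S \<le> (\<Sum>c\<in>C. G (S \<union> {c}) - G S)"
      by (rule union_le_sum_gain[OF G finC]) (use SVB C in auto)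
    also have "\<dots> \<le> (\<Sum>c\<in>C. gain)" by (rule sum_mono) (rule cle)
    also have "\<dots> = real (card C) * gain" by simp
    also have "\<dots> \<le> real n * gain" using C(2) g0 by (intro mult_right_mono) auto
    finally have key: "G (S \<union> C) - G S \<le> real n * gain" .
    have m1: "G C \<le> G (S \<union> C)" using MS_mono[OF G, of C "S \<union> C"] SVB C by auto
    have m2: "G (Sf \<union> C) - G Sf \<le> G (S \<union> C) - G S"
      by (rule dimret[OF G SSf SfV C(1)])
    have ins: "insert e S = S \<union> {e}" by blast
    have h1: "G (insert e S) - G {} \<ge> (G S - G {}) + (P - (G S - G {})) / real n"
    proof -
      have "P - (G S - G {}) \<le> real n * gain" using key m1 unfolding P_def by linarith
      then have "(P - (G S - G {})) / real n \<le> gain" using n0 by (simp add: divide_le_eq mult.commute)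
      then show ?thesis unfolding ins gain_def by linarith
    qed
    have h2: "G (insert e S) - G {} \<ge> (G S - G {}) + D / real n"
    proof -
      have "D \<le> real n * gain" using key m2 unfolding D_def by linarith
      then have "D / real n \<le> gain" using n0 by (simp add: divide_le_eq mult.commute)
      then show ?thesis unfolding ins gain_def by linarith
    qed
    have IH: "\<forall>\<tau>. 0 \<le> \<tau> \<and> \<tau> \<le> real t / real n \<longrightarrow> G S - G {} \<ge> P * (1 - exp (-\<tau>)) + (real t / real n - \<tau>) * D"
      using step.IH SSf by blast
    have st: "real (Suc t) / real n = real t / real n + 1 / real n" by (simp add: add_divide_distrib)
    show ?case
    proof (intro allI impI)
      fix \<tau> :: real assume a: "0 \<le> \<tau> \<and> \<tau> \<le> real (Suc t) / real n"
      have s0: "real t / real n \<ge> 0" by simp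
      have t0: "0 \<le> \<tau>" and t1: "\<tau> \<le> real t / real n + 1 / real n" using a st by auto
      show "G (insert e S) - G {} \<ge> P * (1 - exp (-\<tau>)) + (real (Suc t) / real n - \<tau>) * D"
        unfolding st by (rule exp_step[OF n0 s0 P0 IH h1 h2 t0 t1])
    qed
  qed
  show ?thesis using main[OF run] unfolding P_def D_def by blast
qed

lemma exp_lower_sum:
  fixes x :: real assumes "0 \<le> x"
  shows "(\<Sum>n<N. x^n / fact n) \<le> exp x"
proof -
  have s: "summable (\<lambda>n. x^n /\<^sub>R fact n)" by (rule summable_exp_generic)
  have "(\<Sum>n<N. x^n /\<^sub>R fact n) \<le> suminf (\<lambda>n. x^n /\<^sub>R fact n)"
    by (rule sum_le_suminf[OF s]) (use assms in auto)
  thus ?thesis by (simp add: exp_def divide_inverse mult.commute)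
qed

lemma exp_m1: "exp (-1::real) \<le> 0.368"
proof -
  have "(\<Sum>n<7. (1::real)^n / fact n) \<le> exp 1" by (rule exp_lower_sum) simp
  hence "2.718 \<le> exp (1::real)" by (simp add: numeral_eq_Suc fact_numeral)
  thus ?thesis by (simp add: exp_minus field_simps)
qed

lemma exp_m15: "exp (-0.15::real) \<le> 0.861"
proof -
  have "(\<Sum>n<4. (0.15::real)^n / fact n) \<le> exp 0.15" by (rule exp_lower_sum) simp
  hence "1.1618 \<le> exp (0.15::real)" by (simp add: numeral_eq_Suc fact_numeral)
  thus ?thesis by (simp add: exp_minus field_simps)
qed

lemma exp_m25: "exp (-0.25::real) \<le> 0.779"
proof -
  have "(\<Sum>n<5. (0.25::real)^n / fact n) \<le> exp 0.25" by (rule exp_lower_sum) simp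
  hence "1.2837 \<le> exp (0.25::real)" by (simp add: numeral_eq_Suc fact_numeral)
  thus ?thesis by (simp add: exp_minus field_simps)
qed

lemma shift_ineq:
  fixes y z q E R :: real
  assumes "y - z \<ge> (q - z) * (1 - E) + R" "z \<ge> 0" "E \<ge> 0"
  shows "y \<ge> q * (1 - E) + R"
proof -
  have "(q - z) * (1 - E) = q * (1 - E) - z + z * E" by (simp add: algebra_simps)
  moreover have "z * E \<ge> 0" using assms by simp
  ultimately show ?thesis using assms(1) by linarith
qed

lemma greedy_bound_full:
  assumes V: "finite V" and G: "MS V G" and run: "greedy_run V B w n Sf"
    and wG: "\<And>S e. w S e = G (S \<union> {e}) - G S"
    and Bz: "\<And>S c. S \<subseteq> V \<Longrightarrow> c \<in> B \<Longrightarrow> G (S \<union> {c}) = G S"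
    and C: "C \<subseteq> V" "card C \<le> n" and n: "n \<ge> 1" and tau: "0 \<le> \<tau>" "\<tau> \<le> 1"
  shows "G Sf - G {} \<ge> (G C - G {}) * (1 - exp (-\<tau>)) + (1 - \<tau>) * (G (Sf \<union> C) - G Sf)"
proof -
  have "real n / real n = 1" using n by simp
  then show ?thesis using greedy_bound[OF V G run wG Bz C n] tau by auto
qed

lemma final_lp:
  fixes a1 a2 Ov B h p Q GT g x GS A W1 W2 W3 U1 U2 P2 :: real
  assumes f1: "a1 < (53/100) * Ov"
  and f2: "a2 < (53/100) * Ov"
  and f3: "Ov - B \<le> h"
  and f4: "Ov - p \<le> Q"
  and f5: "Ov - g \<le> GT"
  and f6: "x + g - h \<le> GS"
  and f7: "p \<le> Ov"
  and f8: "0 \<le> p"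
  and f9: "W1 \<le> a1 - A"
  and f10: "W2 \<le> a2 - x"
  and f11: "W3 \<le> a2 - x"
  and f12: "h * (632/1000) \<le> W1"
  and f13: "(GT - x) * (632/1000) \<le> W2"
  and f14: "(GS - x) * (632/1000) \<le> W3"
  and f15: "Q * (139/1000) \<le> U1"
  and f16: "Q * (221/1000) \<le> U2"
  and f17: "p * (221/1000) \<le> P2"
  and f18: "U1 + (85/100) * g \<le> x"
  and f19: "U2 + (75/100) * g \<le> x"
  and f20: "P2 + (75/100) * (B - A) \<le> A"
shows False
proof -
  have g13: "(632/1000) * GT - (632/1000) * x \<le> W2" using f13 by (simp add: algebra_simps)
  have g14: "(632/1000) * GS - (632/1000) * x \<le> W3" using f14 by (simp add: algebra_simps)
  have e20: "(75/100) * (B - A) = (75/100) * B - (75/100) * (A::real)" by (rule right_diff_distrib)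
  have g20: "P2 + (75/100) * B - (75/100) * A \<le> A" using f20 e20 by linarith
  have i: "A + (632/1000) * h < (53/100) * Ov" using f1 f9 f12 by linarith
  have ii: "(368/1000) * x + (632/1000) * GT < (53/100) * Ov" using f2 f10 g13 by linarith
  have iii: "(368/1000) * x + (632/1000) * GS < (53/100) * Ov" using f2 f11 g14 by linarith
  have a: "A + x + (632/1000) * g < (106/100) * Ov" using i iii f6 by linarith
  have b: "A - (632/1000) * B < - (102/1000) * Ov" using i f3 by linarith
  have c: "(368/1000) * x - (632/1000) * g < - (102/1000) * Ov" using ii f5 by linarith
  have iv: "x \<ge> (139/1000) * Ov - (139/1000) * p + (85/100) * g" using f4 f15 f18 by linarith
  have v: "x \<ge> (221/1000) * Ov - (221/1000) * p + (75/100) * g" using f4 f16 f19 by linarith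
  have vi: "(175/100) * A \<ge> (221/1000) * p + (75/100) * B" using f17 g20 by linarith
  show False using a b c iv v vi f7 f8 by linarith
qed

theorem theorem1:
  fixes V :: "'a set" and k l m :: nat and f :: "nat \<Rightarrow> 'a set \<Rightarrow> real"
    and Str1 Str2 :: "'a set" and S1 S2 :: "nat \<Rightarrow> 'a set"
  assumes "finite V"
    and "1 \<le> l" and "l < k" and "k \<le> card V"
    and "\<And>i A. i \<in> {1..m} \<Longrightarrow> A \<subseteq> V \<Longrightarrow> f i A \<ge> 0"
    and "\<And>i. i \<in> {1..m} \<Longrightarrow> monotone_on_subsets V (f i)"
    and "\<And>i. i \<in> {1..m} \<Longrightarrow> submodular_on_subsets V (f i)"
    and "alg1_output V k l m f Str1 S1"
    and "alg2_output V k l m f Str2 S2"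
  shows "max (\<Sum>i\<in>{1..m}. f i (Str1 \<union> S1 i)) (\<Sum>i\<in>{1..m}. f i (Str2 \<union> S2 i))
           \<ge> 0.53 * opt V k l m f"
proof -
  define I where "I = {1..m}"
  note V = assms(1)
  have nonneg: "\<And>i A. i \<in> I \<Longrightarrow> A \<subseteq> V \<Longrightarrow> f i A \<ge> 0" using assms(5) I_def by blast
  have MSf: "\<And>i. i \<in> I \<Longrightarrow> MS V (f i)" using assms(6,7) I_def MS_def by blast
  have finI: "finite I" using I_def by simp
  have r1: "k - l \<ge> 1" using assms(3) by simp
  have l1: "l \<ge> 1" using assms(2) .
  have run1: "greedy_run V {} (\<lambda>S e. \<Sum>i\<in>I. gain (f i) e S) l Str1"
   and run1i: "\<And>i. i \<in> I \<Longrightarrow> greedy_run V Str1 (\<lambda>S e. gain (f i) e (Str1 \<union> S)) (k - l) (S1 i)"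
    using assms(8) unfolding alg1_output_def I_def by auto
  have run2i: "\<And>i. i \<in> I \<Longrightarrow> greedy_run V {} (\<lambda>S e. gain (f i) e S) (k - l) (S2 i)"
   and run2: "greedy_run V {} (\<lambda>S e. \<Sum>i\<in>I. gain (f i) e (S \<union> S2 i)) l Str2"
    using assms(9) unfolding alg2_output_def I_def by auto
  have Str1V: "Str1 \<subseteq> V" and cStr1: "card Str1 = l" using greedy_run_facts[OF run1] by auto
  have S1V: "\<And>i. i \<in> I \<Longrightarrow> S1 i \<subseteq> V" using greedy_run_facts[OF run1i] by blast
  have S2V: "\<And>i. i \<in> I \<Longrightarrow> S2 i \<subseteq> V" using greedy_run_facts[OF run2i] by blast
  have Str2V: "Str2 \<subseteq> V" using greedy_run_facts[OF run2] by blast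
  define Tset where "Tset = {T. T \<subseteq> V \<and> card T \<le> l}"
  define Sset where "Sset = {S. S \<subseteq> V \<and> card S \<le> k - l}"
  define \<Phi> where "\<Phi> = (\<lambda>T. \<Sum>i\<in>I. Max ((\<lambda>S. f i (T \<union> S)) ` Sset))"
  have optdef: "opt V k l m f = Max (\<Phi> ` Tset)" unfolding opt_def \<Phi>_def Tset_def Sset_def I_def by simp
  have finT: "finite Tset" unfolding Tset_def using V by (simp add: finite_subset)
  have finS: "finite Sset" unfolding Sset_def using V by (simp add: finite_subset)
  have neT: "Tset \<noteq> {}" unfolding Tset_def by auto
  have neS: "Sset \<noteq> {}" unfolding Sset_def by auto
  have "Max (\<Phi> ` Tset) \<in> \<Phi> ` Tset" using Max_in finT neT by simp
  then obtain Ts where TsT: "Ts \<in> Tset" and optTs: "opt V k l m f = \<Phi> Ts"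
    using optdef by auto
  have TsV: "Ts \<subseteq> V" and cTs: "card Ts \<le> l" using TsT Tset_def by auto
  have "\<forall>i\<in>I. \<exists>S. S \<in> Sset \<and> Max ((\<lambda>S. f i (Ts \<union> S)) ` Sset) = f i (Ts \<union> S)"
  proof
    fix i assume "i \<in> I"
    have "Max ((\<lambda>S. f i (Ts \<union> S)) ` Sset) \<in> (\<lambda>S. f i (Ts \<union> S)) ` Sset"
      using Max_in finS neS by auto
    then show "\<exists>S. S \<in> Sset \<and> Max ((\<lambda>S. f i (Ts \<union> S)) ` Sset) = f i (Ts \<union> S)" by auto
  qed
  then obtain Sst where Sst: "\<And>i. i \<in> I \<Longrightarrow> Sst i \<in> Sset \<and> Max ((\<lambda>S. f i (Ts \<union> S)) ` Sset) = f i (Ts \<union> Sst i)"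
    by metis
  have SstV: "\<And>i. i \<in> I \<Longrightarrow> Sst i \<subseteq> V" and cSst: "\<And>i. i \<in> I \<Longrightarrow> card (Sst i) \<le> k - l"
    using Sst Sset_def by auto
  have OPT: "opt V k l m f = (\<Sum>i\<in>I. f i (Ts \<union> Sst i))"
    unfolding optTs \<Phi>_def using Sst by (intro sum.cong) auto

  define c1 where "c1 = 1 - exp (-1::real)"
  have c1b: "c1 \<ge> (632/1000)" using exp_m1 c1_def by simp
  have ex1: "real l / real l = 1" "real (k - l) / real (k - l) = 1" using l1 r1 by auto
  have U2: "f i (Str1 \<union> S1 i) - f i Str1 \<ge> (f i (Str1 \<union> Sst i) - f i Str1) * c1" if iI: "i \<in> I" for i
  proof -
    have G: "MS V (\<lambda>S. f i (Str1 \<union> S))" by (rule MS_shift[OF MSf[OF iI] Str1V])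
    have wG: "\<And>S e. gain (f i) e (Str1 \<union> S) = f i (Str1 \<union> (S \<union> {e})) - f i (Str1 \<union> S)"
      unfolding gain_def by (simp add: Un_assoc)
    have Bz: "\<And>S c. S \<subseteq> V \<Longrightarrow> c \<in> Str1 \<Longrightarrow> f i (Str1 \<union> (S \<union> {c})) = f i (Str1 \<union> S)"
      by (metis Un_insert_left Un_insert_right insert_absorb sup_bot.right_neutral Un_left_commute)
    have "\<forall>\<tau>. 0 \<le> \<tau> \<and> \<tau> \<le> real (k - l) / real (k - l) \<longrightarrow>
      f i (Str1 \<union> S1 i) - f i (Str1 \<union> {}) \<ge> (f i (Str1 \<union> Sst i) - f i (Str1 \<union> {})) * (1 - exp (-\<tau>)) +
        (real (k - l) / real (k - l) - \<tau>) * (f i (Str1 \<union> (S1 i \<union> Sst i)) - f i (Str1 \<union> S1 i))"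
      by (rule greedy_bound[OF V G run1i[OF iI] wG Bz SstV[OF iI] cSst[OF iI] r1])
    then have "f i (Str1 \<union> S1 i) - f i (Str1 \<union> {}) \<ge> (f i (Str1 \<union> Sst i) - f i (Str1 \<union> {})) * (1 - exp (-1))"
      using ex1 by (metis (no_types, lifting) add.right_neutral diff_self le_numeral_extra(1,4) mult_zero_left)
    then show ?thesis unfolding c1_def by simp
  qed

  have U3: "f i (S2 i) \<ge> f i (Sst i) * (1 - exp (-\<tau>)) + (1 - \<tau>) * (f i (S2 i \<union> Sst i) - f i (S2 i))"
    if iI: "i \<in> I" and tau: "0 \<le> \<tau>" "\<tau> \<le> 1" for i \<tau>
  proof -
    have wG: "\<And>S e. gain (f i) e S = f i (S \<union> {e}) - f i S" unfolding gain_def by simp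
    have Bz: "\<And>S c. S \<subseteq> V \<Longrightarrow> c \<in> {} \<Longrightarrow> f i (S \<union> {c}) = f i S" by simp
    have "f i (S2 i) - f i {} \<ge> (f i (Sst i) - f i {}) * (1 - exp (-\<tau>)) + (1 - \<tau>) * (f i (S2 i \<union> Sst i) - f i (S2 i))"
      by (rule greedy_bound_full[OF V MSf[OF iI] run2i[OF iI] wG Bz SstV[OF iI] cSst[OF iI] r1 tau])
    then show ?thesis by (rule shift_ineq) (use nonneg[OF iI] in auto)
  qed
  define F where "F = (\<lambda>S. \<Sum>i\<in>I. f i S)"
  have MSF: "MS V F" unfolding F_def by (rule MS_sum[OF MSf])
  have U1: "F Str1 \<ge> F Ts * (1 - exp (-\<tau>)) + (1 - \<tau>) * (F (Str1 \<union> Ts) - F Str1)"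
    if tau: "0 \<le> \<tau>" "\<tau> \<le> 1" for \<tau>
  proof -
    have wG: "\<And>S e. (\<Sum>i\<in>I. gain (f i) e S) = F (S \<union> {e}) - F S" unfolding gain_def F_def by (simp add: sum_subtractf)
    have Bz: "\<And>S c. S \<subseteq> V \<Longrightarrow> c \<in> {} \<Longrightarrow> F (S \<union> {c}) = F S" by simp
    have "F Str1 - F {} \<ge> (F Ts - F {}) * (1 - exp (-\<tau>)) + (1 - \<tau>) * (F (Str1 \<union> Ts) - F Str1)"
      by (rule greedy_bound_full[OF V MSF run1 wG Bz TsV cTs l1 tau])
    moreover have "F {} \<ge> 0" unfolding F_def by (intro sum_nonneg) (use nonneg in auto)
    ultimately show ?thesis by (rule shift_ineq) simp
  qed
  define H where "H = (\<lambda>T. \<Sum>i\<in>I. f i (S2 i \<union> T))"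
  have MSH: "MS V H" unfolding H_def by (rule MS_sum[OF MS_shift[OF MSf S2V]])
  have U4: "H Str2 - H {} \<ge> (H C - H {}) * c1" if C: "C \<subseteq> V" "card C \<le> l" for C
  proof -
    have wG: "\<And>S e. (\<Sum>i\<in>I. gain (f i) e (S \<union> S2 i)) = H (S \<union> {e}) - H S"
      unfolding gain_def H_def by (simp add: sum_subtractf Un_ac)
    have Bz: "\<And>S c. S \<subseteq> V \<Longrightarrow> c \<in> {} \<Longrightarrow> H (S \<union> {c}) = H S" by simp
    have "H Str2 - H {} \<ge> (H C - H {}) * (1 - exp (-1)) + (1 - 1) * (H (Str2 \<union> C) - H Str2)"
      by (rule greedy_bound_full[OF V MSH run2 wG Bz C l1]) auto
    then show ?thesis unfolding c1_def by simp
  qed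

  have P: "f i (Str1 \<union> Sst i) - f i Str1 \<ge> f i (Ts \<union> Sst i) - f i (Str1 \<union> Ts)
     \<and> f i (Sst i) \<ge> f i (Ts \<union> Sst i) - f i Ts
     \<and> f i (S2 i \<union> Ts) \<ge> f i Ts
     \<and> f i (S2 i \<union> Ts) \<ge> f i (Ts \<union> Sst i) - (f i (S2 i \<union> Sst i) - f i (S2 i))
     \<and> f i (S2 i \<union> Str1) \<ge> f i (S2 i) + (f i (S2 i \<union> Sst i) - f i (S2 i)) - (f i (Str1 \<union> Sst i) - f i Str1)
     \<and> f i (Str1 \<union> Ts) \<ge> f i Ts \<and> f i (Str1 \<union> Ts) \<ge> f i Str1
     \<and> f i (S2 i \<union> Ts) \<ge> f i (S2 i) \<and> f i (S2 i \<union> Str1) \<ge> f i (S2 i)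
     \<and> f i Ts \<le> f i (Ts \<union> Sst i) \<and> f i (Str1 \<union> Sst i) - f i Str1 \<ge> 0
     \<and> f i (S2 i \<union> Sst i) - f i (S2 i) \<ge> 0 \<and> f i Ts \<ge> 0 \<and> f i (Sst i) \<ge> 0"
    if iI: "i \<in> I" for i
  proof -
    note M = MSf[OF iI]
    note mono = MS_mono[OF M]
    have sV: "Sst i \<subseteq> V" "S2 i \<subseteq> V" using SstV S2V iI by auto
    have b1: "f i ((Str1 \<union> Ts) \<union> Sst i) - f i (Str1 \<union> Ts) \<le> f i (Str1 \<union> Sst i) - f i Str1"
      by (rule dimret[OF M]) (use Str1V TsV sV in auto)
    have b2: "f i (Ts \<union> Sst i) \<le> f i ((Str1 \<union> Ts) \<union> Sst i)" by (rule mono) (use Str1V TsV sV in auto)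
    have d1: "f i Ts + f i (Sst i) \<ge> f i (Ts \<union> Sst i) + f i (Ts \<inter> Sst i)"
      by (rule MS_sub[OF M]) (use TsV sV in auto)
    have d2: "f i (Ts \<inter> Sst i) \<ge> 0" by (rule nonneg[OF iI]) (use TsV in auto)
    have e1: "f i (S2 i \<union> Ts) \<ge> f i Ts" by (rule mono) (use TsV sV in auto)
    have e2: "f i ((S2 i \<union> Ts) \<union> Sst i) - f i (S2 i \<union> Ts) \<le> f i (S2 i \<union> Sst i) - f i (S2 i)"
      by (rule dimret[OF M]) (use TsV sV in auto)
    have e3: "f i (Ts \<union> Sst i) \<le> f i ((S2 i \<union> Ts) \<union> Sst i)" by (rule mono) (use TsV sV in auto)
    have f1: "f i ((S2 i \<union> Str1) \<union> Sst i) - f i (S2 i \<union> Str1) \<le> f i (Str1 \<union> Sst i) - f i Str1"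
      by (rule dimret[OF M]) (use Str1V sV in auto)
    have f2: "f i (S2 i \<union> Sst i) \<le> f i ((S2 i \<union> Str1) \<union> Sst i)" by (rule mono) (use Str1V sV in auto)
    have g1: "f i (Str1 \<union> Ts) \<ge> f i Ts" "f i (Str1 \<union> Ts) \<ge> f i Str1"
      by (rule mono, use Str1V TsV in auto)+
    have g2: "f i (S2 i \<union> Ts) \<ge> f i (S2 i)" "f i (S2 i \<union> Str1) \<ge> f i (S2 i)"
      by (rule mono, use Str1V TsV sV in auto)+
    have g3: "f i Ts \<le> f i (Ts \<union> Sst i)" by (rule mono) (use TsV sV in auto)
    have g4: "f i (Str1 \<union> Sst i) \<ge> f i Str1" by (rule mono) (use Str1V sV in auto)
    have g5: "f i (S2 i \<union> Sst i) \<ge> f i (S2 i)" by (rule mono) (use sV in auto)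
    have g6: "f i Ts \<ge> 0" "f i (Sst i) \<ge> 0" using nonneg[OF iI] TsV sV by auto
    show ?thesis using b1 b2 d1 d2 e1 e2 e3 f1 f2 g1 g2 g3 g4 g5 g6 by linarith
  qed

  define Ov where "Ov = (\<Sum>i\<in>I. f i (Ts \<union> Sst i))"
  define p where "p = (\<Sum>i\<in>I. f i Ts)"
  define A where "A = (\<Sum>i\<in>I. f i Str1)"
  define B where "B = (\<Sum>i\<in>I. f i (Str1 \<union> Ts))"
  define h where "h = (\<Sum>i\<in>I. f i (Str1 \<union> Sst i) - f i Str1)"
  define x where "x = (\<Sum>i\<in>I. f i (S2 i))"
  define g where "g = (\<Sum>i\<in>I. f i (S2 i \<union> Sst i) - f i (S2 i))"
  define Q where "Q = (\<Sum>i\<in>I. f i (Sst i))"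
  define a1 where "a1 = (\<Sum>i\<in>I. f i (Str1 \<union> S1 i))"
  define a2 where "a2 = (\<Sum>i\<in>I. f i (Str2 \<union> S2 i))"
  define GT where "GT = (\<Sum>i\<in>I. f i (S2 i \<union> Ts))"
  define GS where "GS = (\<Sum>i\<in>I. f i (S2 i \<union> Str1))"
  have s1: "h \<ge> Ov - B"
  proof -
    have "(\<Sum>i\<in>I. f i (Ts \<union> Sst i) - f i (Str1 \<union> Ts)) \<le> h" unfolding h_def by (rule sum_mono) (use P in blast)
    then show ?thesis by (simp add: sum_subtractf Ov_def B_def)
  qed
  have s2: "Q \<ge> Ov - p"
  proof -
    have "(\<Sum>i\<in>I. f i (Ts \<union> Sst i) - f i Ts) \<le> Q" unfolding Q_def by (rule sum_mono) (use P in blast)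
    then show ?thesis by (simp add: sum_subtractf Ov_def p_def)
  qed
  have s3: "GT \<ge> p" unfolding GT_def p_def by (rule sum_mono) (use P in blast)
  have s4: "GT \<ge> Ov - g"
  proof -
    have "(\<Sum>i\<in>I. f i (Ts \<union> Sst i) - (f i (S2 i \<union> Sst i) - f i (S2 i))) \<le> GT" unfolding GT_def by (rule sum_mono) (use P in blast)
    then show ?thesis by (simp add: sum_subtractf Ov_def g_def)
  qed
  have s5: "GS \<ge> x + g - h"
  proof -
    have "(\<Sum>i\<in>I. f i (S2 i) + (f i (S2 i \<union> Sst i) - f i (S2 i)) - (f i (Str1 \<union> Sst i) - f i Str1)) \<le> GS"
      unfolding GS_def by (rule sum_mono) (use P in blast)
    then show ?thesis by (simp add: sum_subtractf sum.distrib x_def g_def h_def)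
  qed
  have s6: "B \<ge> p" "B \<ge> A" unfolding B_def p_def A_def by (rule sum_mono, use P in blast)+
  have s7: "GT \<ge> x" "GS \<ge> x" unfolding GT_def GS_def x_def by (rule sum_mono, use P in blast)+
  have s8: "p \<le> Ov" unfolding Ov_def p_def by (rule sum_mono) (use P in blast)
  have s9: "h \<ge> 0" "g \<ge> 0" "p \<ge> 0" "Q \<ge> 0" unfolding h_def g_def p_def Q_def
    by (rule sum_nonneg, use P in blast)+
  have s10: "A \<ge> 0" "x \<ge> 0" unfolding A_def x_def
    by (rule sum_nonneg, use nonneg Str1V S2V in blast)+
  have t1: "a1 - A \<ge> h * c1"
  proof -
    have "(\<Sum>i\<in>I. (f i (Str1 \<union> Sst i) - f i Str1) * c1) \<le> (\<Sum>i\<in>I. f i (Str1 \<union> S1 i) - f i Str1)"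
      by (rule sum_mono) (rule U2)
    moreover have "(\<Sum>i\<in>I. (f i (Str1 \<union> Sst i) - f i Str1) * c1) = h * c1"
      unfolding h_def by (simp add: sum_distrib_right)
    moreover have "(\<Sum>i\<in>I. f i (Str1 \<union> S1 i) - f i Str1) = a1 - A"
      unfolding a1_def A_def by (simp add: sum_subtractf)
    ultimately show ?thesis by simp
  qed
  have t3: "x \<ge> Q * (1 - exp (-\<tau>)) + (1 - \<tau>) * g" if "0 \<le> \<tau>" "\<tau> \<le> 1" for \<tau>
  proof -
    have "(\<Sum>i\<in>I. f i (Sst i) * (1 - exp (-\<tau>)) + (1 - \<tau>) * (f i (S2 i \<union> Sst i) - f i (S2 i))) \<le> x"
      unfolding x_def by (rule sum_mono) (rule U3, use that in auto)
    then show ?thesis by (simp add: sum.distrib sum_distrib_right sum_distrib_left Q_def g_def)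
  qed
  have t4: "A \<ge> p * (1 - exp (-\<tau>)) + (1 - \<tau>) * (B - A)" if "0 \<le> \<tau>" "\<tau> \<le> 1" for \<tau>
    using U1[OF that] unfolding F_def A_def p_def B_def by simp
  have Hx: "H {} = x" unfolding H_def x_def by simp
  have t5: "a2 - x \<ge> (GT - x) * c1" "a2 - x \<ge> (GS - x) * c1"
  proof -
    have "H Str2 = a2" unfolding H_def a2_def by (simp add: Un_commute)
    moreover have "H Ts = GT" "H Str1 = GS" unfolding H_def GT_def GS_def by simp_all
    ultimately show "a2 - x \<ge> (GT - x) * c1" "a2 - x \<ge> (GS - x) * c1"
      using U4[OF TsV cTs] U4[OF Str1V] cStr1 Hx by auto
  qed
  have l1': "h * c1 \<ge> h * (632/1000)" "(GT - x) * c1 \<ge> (GT - x) * (632/1000)" "(GS - x) * c1 \<ge> (GS - x) * (632/1000)"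
  proof -
    show "h * c1 \<ge> h * (632/1000)" by (rule mult_left_mono[OF c1b s9(1)])
    show "(GT - x) * c1 \<ge> (GT - x) * (632/1000)" by (rule mult_left_mono[OF c1b]) (use s7 in simp)
    show "(GS - x) * c1 \<ge> (GS - x) * (632/1000)" by (rule mult_left_mono[OF c1b]) (use s7 in simp)
  qed
  have l2: "Q * (1 - exp (-0.15)) \<ge> Q * (139/1000)" "Q * (1 - exp (-0.25)) \<ge> Q * (221/1000)"
           "p * (1 - exp (-0.15)) \<ge> p * (139/1000)" "p * (1 - exp (-0.25)) \<ge> p * (221/1000)"
  proof -
    have a: "1 - exp (-0.15::real) \<ge> (139/1000)" "1 - exp (-0.25::real) \<ge> (221/1000)" using exp_m15 exp_m25 by simp_all
    show "Q * (1 - exp (-0.15)) \<ge> Q * (139/1000)" by (rule mult_left_mono[OF a(1) s9(4)])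
    show "Q * (1 - exp (-0.25)) \<ge> Q * (221/1000)" by (rule mult_left_mono[OF a(2) s9(4)])
    show "p * (1 - exp (-0.15)) \<ge> p * (139/1000)" by (rule mult_left_mono[OF a(1) s9(3)])
    show "p * (1 - exp (-0.25)) \<ge> p * (221/1000)" by (rule mult_left_mono[OF a(2) s9(3)])
  qed
  have u1: "x \<ge> Q * (1 - exp (-0.15)) + (1 - 0.15) * g" "x \<ge> Q * (1 - exp (-0.25)) + (1 - 0.25) * g"
    by (rule t3; simp)+
  have u2: "A \<ge> p * (1 - exp (-0.15)) + (1 - 0.15) * (B - A)" "A \<ge> p * (1 - exp (-0.25)) + (1 - 0.25) * (B - A)"
    by (rule t4; simp)+
  have OPT': "opt V k l m f = Ov" using OPT Ov_def by simp
  show ?thesis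
  proof (rule ccontr)
    assume "\<not> ?thesis"
    then have "a1 < (53/100) * Ov" "a2 < (53/100) * Ov" unfolding OPT' a1_def a2_def I_def by auto
    note a = this
    have q1: "Q * (1 - exp (-0.15)) + (85/100) * g \<le> x" using u1(1) by simp
    have q2: "Q * (1 - exp (-0.25)) + (75/100) * g \<le> x" using u1(2) by simp
    have q3: "p * (1 - exp (-0.25)) + (75/100) * (B - A) \<le> A" using u2(2) by simp
    show False
      by (rule final_lp[OF a s1 s2 s4 s5 s8 s9(3) t1 t5 l1' l2(1,2,4) q1 q2 q3])
  qed
qed

end
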